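(* Let $\phi\in\mathcal S$ with radius of convergence $x_0$. Then: (i) The function $h(x):=\phi'(-x)$ is completely monotone on $(-x_0,\infty)$, i.e. $(-1)^nh^{(n)}(x)\ge0$ for all $n\ge0$ and $x\in(-x_0,\infty)$. (ii) $h$ is the Laplace–Stieltjes transform $h(x)=\int_0^\infty e^{-xt}\mu(dt)$ of a finite nonnegative measure $\mu$ on $[0,\infty)$, with $h(x)=\sum_{m\ge0}\frac{\phi_{m+1}}{m!}(-x)^m$. (iii) $\phi_{m+1}=\int t^m\mu(dt)$ for all $m\ge0$; in particular, $\mu$ has total mass $\phi_1$. (iv) $\phi_{m+1}\phi_{m-1}\ge\phi_m^2$ for all $m\ge2$, i.e. $(\phi_m)_{m\ge1}$ is log-convex.
   Context: Let $(\phi_m)_{m\ge1}$ be nonnegative reals with $\phi_1>0$, and let $\phi(x)=\sum_{m\ge1}\phi_mx^m/m!$ have radius of convergence $x_0\in(0,\infty]$. A $C^\infty$ function $f$ is absolutely monotone on an open interval $I$ if $f^{(n)}(x)\ge0$ for all $n\ge0$ and $x\in I$. We write $\phi\in\mathcal S$ if $\phi$ is defined (finite) on the whole half-line $(-\infty,x_0)$ and $\phi'$ is absolutely monotone on $(-\infty,x_0)$. *)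

theory Defs
  imports "HOL-Analysis.Analysis"
begin

definition smooth_on :: "real set \<Rightarrow> (real \<Rightarrow> real) \<Rightarrow> bool" where
  "smooth_on I f \<longleftrightarrow>
     (\<forall>n. \<forall>x\<in>I. ((deriv ^^ n) f has_real_derivative (deriv ^^ Suc n) f x) (at x))"

definition abs_monotone_on :: "real set \<Rightarrow> (real \<Rightarrow> real) \<Rightarrow> bool" where
  "abs_monotone_on I f \<longleftrightarrow> smooth_on I f \<and> (\<forall>n. \<forall>x\<in>I. (deriv ^^ n) f x \<ge> 0)"

definition compl_monotone_on :: "real set \<Rightarrow> (real \<Rightarrow> real) \<Rightarrow> bool" where
  "compl_monotone_on I f \<longleftrightarrow> smooth_on I f \<and> (\<forall>n. \<forall>x\<in>I. (-1) ^ n * (deriv ^^ n) f x \<ge> 0)"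

text \<open>Power series coefficients of phi(x) = sum_{m>=1} phi_m x^m / m!.\<close>
definition phi_coeffs :: "(nat \<Rightarrow> real) \<Rightarrow> nat \<Rightarrow> real" where
  "phi_coeffs c n = (if n = 0 then 0 else c n / fact n)"

definition in_S :: "(nat \<Rightarrow> real) \<Rightarrow> (real \<Rightarrow> real) \<Rightarrow> bool" where
  "in_S c F \<longleftrightarrow>
     (\<forall>x. ereal \<bar>x\<bar> < conv_radius (phi_coeffs c) \<longrightarrow>
            F x = (\<Sum>n. phi_coeffs c n * x ^ n)) \<and>
     (\<forall>x. ereal x < conv_radius (phi_coeffs c) \<longrightarrow> F differentiable (at x)) \<and>
     abs_monotone_on {x. ereal x < conv_radius (phi_coeffs c)} (deriv F)"

end

theory Submission
  imports Defs "HOL-Probability.Probability" "HOL-Real_Asymp.Real_Asymp"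
begin


locale bern =
  fixes D :: "nat \<Rightarrow> real \<Rightarrow> real" and a y :: real
  assumes der: "\<And>k t. a \<le> t \<Longrightarrow> t \<le> y \<Longrightarrow> (D k has_real_derivative D (Suc k) t) (at t)"
    and nn: "\<And>k t. a \<le> t \<Longrightarrow> t \<le> y \<Longrightarrow> D k t \<ge> 0"
begin

definition T :: "nat \<Rightarrow> nat \<Rightarrow> real \<Rightarrow> real" where
  "T n k t = (\<Sum>i<n. D (k+i) a * (t-a)^i / fact i)"
definition R :: "nat \<Rightarrow> nat \<Rightarrow> real \<Rightarrow> real" where
  "R n k t = D k t - T n k t"

lemma pow_deriv: "((\<lambda>t. (t-a)^m) has_real_derivative real m * (t-a)^(m-1)) (at t)"
  by (rule derivative_eq_intros refl)+ simp

lemma T_Suc: "T (Suc n) k t = T n k t + D (k+n) a * (t-a)^n / fact n"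
  by (simp add: T_def)

lemma T_at_a: "T (Suc n) k a = D k a"
  by (induction n) (auto simp: T_def)

lemma T_deriv: "(T (Suc n) k has_real_derivative T n (Suc k) t) (at t)"
proof (induction n)
  case 0
  then show ?case by (simp add: T_def)
next
  case (Suc n)
  have e: "T (Suc n) (Suc k) t = T n (Suc k) t + D (k + Suc n) a * (t-a)^n / fact n"
    by (simp add: T_Suc)
  have "((\<lambda>t. D (k + Suc n) a * (t-a)^Suc n / fact (Suc n)) has_real_derivative
          D (k + Suc n) a * (real (Suc n) * (t-a)^n) / fact (Suc n)) (at t)"
    using DERIV_cdivide[OF DERIV_cmult[OF pow_deriv[of "Suc n" t]], of "D (k + Suc n) a" "fact (Suc n)"] by simp
  moreover have "D (k + Suc n) a * (real (Suc n) * (t-a)^n) / fact (Suc n) = D (k + Suc n) a * (t-a)^n / fact n"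
  proof -
    have "(fact (Suc n) :: real) = real (Suc n) * fact n" by (simp del: of_nat_Suc)
    then show ?thesis by (simp add: divide_simps del: fact_Suc of_nat_Suc)
  qed
  ultimately have "((\<lambda>t. D (k + Suc n) a * (t-a)^Suc n / fact (Suc n)) has_real_derivative
          D (k + Suc n) a * (t-a)^n / fact n) (at t)" by simp
  from DERIV_add[OF Suc this] show ?case
    unfolding e by (simp add: T_Suc[of "Suc n"] add.commute add.left_commute)
qed

lemma R_deriv0: assumes "a \<le> t" "t \<le> y" shows "(R 0 k has_real_derivative D (Suc k) t) (at t)"
proof -
  have "R 0 k = D k" by (auto simp: R_def T_def fun_eq_iff)
  then show ?thesis using der[OF assms] by simp
qed

lemma R_derivS: "a \<le> t \<Longrightarrow> t \<le> y \<Longrightarrow> (R (Suc n) k has_real_derivative R n (Suc k) t) (at t)"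
  unfolding R_def[abs_def] using DERIV_diff[OF der T_deriv] by (simp add: R_def)

lemma R_at_a: "R (Suc n) k a = 0"
  by (simp add: R_def T_at_a)

lemma R_nonneg: "a \<le> t \<Longrightarrow> t \<le> y \<Longrightarrow> R n k t \<ge> 0"
proof (induction n arbitrary: k t)
  case 0
  then show ?case using nn by (simp add: R_def T_def)
next
  case (Suc n)
  have "R (Suc n) k a \<le> R (Suc n) k t"
    by (rule DERIV_nonneg_imp_nondecreasing[OF Suc.prems(1)])
       (use Suc.prems Suc.IH in \<open>auto intro!: exI R_derivS\<close>)
  then show ?case by (simp add: R_at_a)
qed

lemma E_nonneg: "a \<le> t \<Longrightarrow> t \<le> y \<Longrightarrow> (t-a) * R n (Suc k) t - real (Suc n) * R (Suc n) k t \<ge> 0"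
proof (induction n arbitrary: k t)
  case 0
  let ?E = "\<lambda>t. (t-a) * R 0 (Suc k) t - real (Suc 0) * R (Suc 0) k t"
  have "?E a \<le> ?E t"
  proof (rule DERIV_nonneg_imp_nondecreasing[OF 0(1)])
    fix s assume s: "a \<le> s" "s \<le> t"
    then have s': "s \<le> y" using 0 by simp
    have "(?E has_real_derivative (1 * R 0 (Suc k) s + (s-a) * D (Suc (Suc k)) s - 1 * R 0 (Suc k) s)) (at s)"
      using s s' by (auto intro!: derivative_eq_intros R_deriv0 R_derivS)
    moreover have "0 \<le> (s-a) * D (Suc (Suc k)) s" using s s' nn by simp
    ultimately show "\<exists>d. (?E has_real_derivative d) (at s) \<and> 0 \<le> d" by auto
  qed
  then show ?case by (simp add: R_at_a)
next
  case (Suc n)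
  let ?E = "\<lambda>t. (t-a) * R (Suc n) (Suc k) t - real (Suc (Suc n)) * R (Suc (Suc n)) k t"
  have "?E a \<le> ?E t"
  proof (rule DERIV_nonneg_imp_nondecreasing[OF Suc.prems(1)])
    fix s assume s: "a \<le> s" "s \<le> t"
    then have s': "s \<le> y" using Suc.prems by simp
    have "(?E has_real_derivative (1 * R (Suc n) (Suc k) s + (s-a) * R n (Suc (Suc k)) s
          - real (Suc (Suc n)) * R (Suc n) (Suc k) s)) (at s)"
      using s s' by (auto intro!: derivative_eq_intros R_derivS)
    moreover have "1 * R (Suc n) (Suc k) s + (s-a) * R n (Suc (Suc k)) s
          - real (Suc (Suc n)) * R (Suc n) (Suc k) s = (s-a) * R n (Suc (Suc k)) s - real (Suc n) * R (Suc n) (Suc k) s"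
      by (simp add: algebra_simps)
    moreover have "0 \<le> (s-a) * R n (Suc (Suc k)) s - real (Suc n) * R (Suc n) (Suc k) s"
      using Suc.IH s s' by blast
    ultimately show "\<exists>d. (?E has_real_derivative d) (at s) \<and> 0 \<le> d" by auto
  qed
  then show ?case by (simp add: R_at_a)
qed

lemma ratio_mono:
  assumes "a < s" "s \<le> t" "t \<le> y"
  shows "R (Suc n) 0 s / (s-a)^Suc n \<le> R (Suc n) 0 t / (t-a)^Suc n"
proof (rule DERIV_nonneg_imp_nondecreasing[OF assms(2)])
  fix u assume u: "s \<le> u" "u \<le> t"
  then have ua: "a < u" "u \<le> y" using assms by auto
  let ?Q = "\<lambda>u. R (Suc n) 0 u / (u-a)^Suc n"
  have "(?Q has_real_derivative
     (R n (Suc 0) u * (u-a)^Suc n - R (Suc n) 0 u * (real (Suc n) * (u-a)^(Suc n - 1))) / ((u-a)^Suc n * (u-a)^Suc n)) (at u)"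
    using ua by (intro DERIV_divide R_derivS pow_deriv) auto
  moreover have e1: "R n (Suc 0) u * (u-a)^Suc n - R (Suc n) 0 u * (real (Suc n) * (u-a)^(Suc n - 1))
      = (u-a)^n * ((u-a) * R n (Suc 0) u - real (Suc n) * R (Suc n) 0 u)"
    by (simp add: algebra_simps)
  moreover have e2: "0 \<le> (u-a)^n * ((u-a) * R n (Suc 0) u - real (Suc n) * R (Suc n) 0 u)"
    using E_nonneg[of u n 0] ua by simp
  ultimately show "\<exists>d. (?Q has_real_derivative d) (at u) \<and> 0 \<le> d"
  proof -
    have pos: "0 < (u-a)^Suc n * (u-a)^Suc n" using ua by simp
    have "0 \<le> (R n (Suc 0) u * (u-a)^Suc n - R (Suc n) 0 u * (real (Suc n) * (u-a)^(Suc n - 1))) / ((u-a)^Suc n * (u-a)^Suc n)"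
      apply (rule divide_nonneg_pos)
       apply (subst e1, rule e2)
      by (rule pos)
    then show ?thesis using \<open>(?Q has_real_derivative _) _\<close> by blast
  qed
qed

lemma R_le: "a \<le> t \<Longrightarrow> t \<le> y \<Longrightarrow> R n 0 t \<le> D 0 t"
  unfolding R_def T_def using nn by (auto intro!: sum_nonneg)

lemma taylor_sums:
  assumes "a \<le> x" "x < y"
  shows "(\<lambda>i. D i a * (x-a)^i / fact i) sums D 0 x"
proof -
  have "(\<lambda>n. R (Suc n) 0 x) \<longlonglongrightarrow> 0"
  proof (cases "x = a")
    case True
    then show ?thesis by (simp add: R_at_a)
  next
    case False
    then have xa: "a < x" using assms by simp
    let ?q = "(x-a)/(y-a)"
    have q: "0 \<le> ?q" "?q < 1" using xa assms by auto
    have bnd: "R (Suc n) 0 x \<le> ?q ^ Suc n * D 0 y" for n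
    proof -
      have "R (Suc n) 0 x / (x-a)^Suc n \<le> R (Suc n) 0 y / (y-a)^Suc n"
        using ratio_mono[of x y n] xa assms by simp
      then have "R (Suc n) 0 x \<le> (x-a)^Suc n * (R (Suc n) 0 y / (y-a)^Suc n)"
        using xa by (simp add: field_simps)
      also have "\<dots> = ?q ^ Suc n * R (Suc n) 0 y" by (simp add: power_divide)
      also have "\<dots> \<le> ?q ^ Suc n * D 0 y"
        using R_le[of y "Suc n"] xa assms q by (intro mult_left_mono) auto
      finally show ?thesis .
    qed
    have "(\<lambda>n. ?q ^ Suc n * D 0 y) \<longlonglongrightarrow> 0 * D 0 y"
      by (intro tendsto_intros LIMSEQ_Suc[OF LIMSEQ_power_zero]) (use q xa assms in \<open>auto simp: abs_of_pos\<close>)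
    then have lim: "(\<lambda>n. ?q ^ Suc n * D 0 y) \<longlonglongrightarrow> 0" by simp
    show ?thesis
      by (rule real_tendsto_sandwich[of "\<lambda>n. 0" _ _ "\<lambda>n. ?q ^ Suc n * D 0 y", OF _ _ tendsto_const lim])
         (use bnd R_nonneg assms in auto)
  qed
  then have "(\<lambda>n. D 0 x - R (Suc n) 0 x) \<longlonglongrightarrow> D 0 x - 0"
    by (intro tendsto_intros)
  then have "(\<lambda>n. T (Suc n) 0 x) \<longlonglongrightarrow> D 0 x"
    by (simp add: R_def)
  then have "(\<lambda>n. T n 0 x) \<longlonglongrightarrow> D 0 x" by (rule LIMSEQ_imp_Suc)
  then show ?thesis by (simp add: sums_def T_def)
qed

end


locale bsetup =
  fixes D :: "nat \<Rightarrow> real \<Rightarrow> real" and b :: ereal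
  assumes der: "\<And>k t. ereal t < b \<Longrightarrow> (D k has_real_derivative D (Suc k) t) (at t)"
    and nn: "\<And>k t. ereal t < b \<Longrightarrow> D k t \<ge> 0"
    and bpos: "0 < b" and g0pos: "D 0 0 > 0"
begin

lemma taylor:
  assumes "a \<le> x" "ereal x < b"
  shows "(\<lambda>i. D i a * (x-a)^i / fact i) sums D 0 x"
proof -
  obtain z where z: "ereal x < ereal z" "ereal z < b" using ereal_dense2[OF assms(2)] by blast
  have le: "ereal t < b" if "t \<le> z" for t
    using z that by (meson ereal_less_eq(3) order_le_less_trans)
  interpret bern D a z
  proof
    fix k t assume "a \<le> t" "t \<le> z"
    then have "ereal t < b" using le by blast
    then show "(D k has_real_derivative D (Suc k) t) (at t)" "D k t \<ge> 0"
      using der nn by blast+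
  qed
  show ?thesis using taylor_sums assms z by simp
qed

definition NN :: "nat \<Rightarrow> real" where "NN m = real (Suc m)"
definition w :: "nat \<Rightarrow> nat \<Rightarrow> real" where
  "w m k = D k (- NN m) * NN m ^ k / fact k / D 0 0"
definition Mn :: "nat \<Rightarrow> real measure" where
  "Mn m = distr (density (count_space UNIV) (\<lambda>k. ennreal (w m k))) borel (\<lambda>k. real k / NN m)"
definition L :: "nat \<Rightarrow> real \<Rightarrow> real" where
  "L m y = (if 0 < 1 + y / NN m then NN m * ln (1 + y / NN m) else y)"

lemma NN_pos: "NN m > 0" by (simp add: NN_def)

lemma w_nonneg: "w m k \<ge> 0"
proof -
  have "ereal (- NN m) < 0" using NN_pos[of m] by (simp add: zero_ereal_def)
  then have "ereal (- NN m) < b" using bpos by (rule order.strict_trans)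
  then show ?thesis unfolding w_def using nn NN_pos[of m] g0pos by simp
qed

lemma w_sums:
  assumes "- NN m \<le> y" "ereal y < b"
  shows "(\<lambda>k. w m k * (1 + y / NN m)^k) sums (D 0 y / D 0 0)"
proof -
  have "(\<lambda>k. D k (- NN m) * (y - - NN m)^k / fact k) sums D 0 y"
    using taylor assms by blast
  then have "(\<lambda>k. D k (- NN m) * (y - - NN m)^k / fact k / D 0 0) sums (D 0 y / D 0 0)"
    by (rule sums_divide)
  moreover have "D k (- NN m) * (y - - NN m)^k / fact k / D 0 0 = w m k * (1 + y / NN m)^k" for k
  proof -
    have "y - - NN m = NN m * (1 + y / NN m)" using NN_pos[of m] by (simp add: field_simps)
    then show ?thesis unfolding w_def by (simp add: power_mult_distrib)
  qed
  ultimately show ?thesis by simp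
qed

lemma nn_int_Mn:
  assumes f[measurable]: "f \<in> borel_measurable borel"
  shows "(\<integral>\<^sup>+t. f t \<partial>Mn m) = (\<integral>\<^sup>+k. ennreal (w m k) * f (real k / NN m) \<partial>count_space UNIV)"
  unfolding Mn_def
  by (subst nn_integral_distr) (auto simp: nn_integral_density)

lemma kernel_eq:
  assumes "- NN m < y"
  shows "exp (real k / NN m * L m y) = (1 + y / NN m)^k"
proof -
  have p: "0 < 1 + y / NN m" using assms NN_pos[of m] by (simp add: field_simps)
  have "exp (real k / NN m * L m y) = exp (real k * ln (1 + y / NN m))"
    using p NN_pos[of m] by (simp add: L_def)
  also have "\<dots> = exp (ln (1 + y / NN m)) ^ k" by (rule exp_of_nat_mult)
  also have "\<dots> = (1 + y / NN m)^k" using p by simp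
  finally show ?thesis .
qed

lemma int_kernel:
  assumes "- NN m < y" "ereal y < b"
  shows "(\<integral>\<^sup>+t. ennreal (exp (t * L m y)) \<partial>Mn m) = ennreal (D 0 y / D 0 0)"
proof -
  have p: "0 < 1 + y / NN m" using assms NN_pos[of m] by (simp add: field_simps)
  have "(\<integral>\<^sup>+t. ennreal (exp (t * L m y)) \<partial>Mn m)
      = (\<integral>\<^sup>+k. ennreal (w m k * (1 + y / NN m)^k) \<partial>count_space UNIV)"
  proof (subst nn_int_Mn)
    show "(\<integral>\<^sup>+k. ennreal (w m k) * ennreal (exp (real k / NN m * L m y)) \<partial>count_space UNIV) =
      (\<integral>\<^sup>+k. ennreal (w m k * (1 + y / NN m)^k) \<partial>count_space UNIV)"
      by (simp only: kernel_eq[OF assms(1)] ennreal_mult'[symmetric] w_nonneg)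
  qed simp
  also have "\<dots> = (\<Sum>k. ennreal (w m k * (1 + y / NN m)^k))"
    by (rule nn_integral_count_space_nat)
  also have "\<dots> = ennreal (\<Sum>k. w m k * (1 + y / NN m)^k)"
    using w_sums[OF _ assms(2), of m] assms(1) p w_nonneg
    by (intro suminf_ennreal2) (auto simp: sums_iff)
  also have "\<dots> = ennreal (D 0 y / D 0 0)"
    using w_sums[OF _ assms(2), of m] assms(1) by (simp add: sums_iff)
  finally show ?thesis .
qed

lemma L0: "L m 0 = 0" by (simp add: L_def)

lemma Mn_dist: "real_distribution (Mn m)"
proof -
  have "emeasure (Mn m) (space (Mn m)) = 1"
  proof -
    have "(\<integral>\<^sup>+t. ennreal (exp (t * L m 0)) \<partial>Mn m) = ennreal (D 0 0 / D 0 0)"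
      using int_kernel[of m 0] NN_pos[of m] bpos by (simp add: zero_ereal_def)
    then have "(\<integral>\<^sup>+t. 1 \<partial>Mn m) = 1" using g0pos by (simp add: L0 del: nn_integral_const)
    then show ?thesis by simp
  qed
  then show ?thesis
    unfolding real_distribution_def real_distribution_axioms_def
    by (auto intro!: prob_spaceI simp: Mn_def)
qed

lemma Mn_neg: "emeasure (Mn m) {..<0} = 0"
proof -
  have "(\<lambda>k. real k / NN m) -` {..<0} = {}" using NN_pos[of m] by (auto simp: field_simps)
  then show ?thesis unfolding Mn_def by (subst emeasure_distr) auto
qed

end


context bsetup
begin

lemma tail_bound:
  assumes d: "0 < d" "ereal d < b" and T: "0 \<le> T"
  shows "emeasure (Mn m) {T<..} \<le> ennreal (D 0 d / D 0 0 / (1 + T*d))"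
proof -
  have pos: "0 < 1 + T*d" using d T by (simp add: add_pos_nonneg)
  have "emeasure (Mn m) {T<..} = (\<integral>\<^sup>+t. indicator {T<..} t \<partial>Mn m)"
    by (simp add: Mn_def)
  also have "\<dots> = (\<integral>\<^sup>+k. ennreal (w m k) * indicator {T<..} (real k / NN m) \<partial>count_space UNIV)"
    by (rule nn_int_Mn) simp
  also have "\<dots> \<le> (\<integral>\<^sup>+k. ennreal (w m k * (1 + d / NN m)^k / (1 + T*d)) \<partial>count_space UNIV)"
  proof (rule nn_integral_mono)
    fix k
    show "ennreal (w m k) * indicator {T<..} (real k / NN m) \<le> ennreal (w m k * (1 + d / NN m)^k / (1 + T*d))"
    proof (cases "T < real k / NN m")
      case True
      have "1 + real k * (d / NN m) \<le> (1 + d / NN m)^k"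
        using d NN_pos[of m] by (intro Bernoulli_inequality) (simp add: field_simps)
      moreover have "T * d < real k * (d / NN m)"
        using True d NN_pos[of m] by (simp add: field_simps)
      ultimately have "1 + T*d \<le> (1 + d / NN m)^k" by linarith
      then have "1 \<le> (1 + d / NN m)^k / (1 + T*d)" using pos by simp
      then have "w m k * 1 \<le> w m k * ((1 + d / NN m)^k / (1 + T*d))"
        using w_nonneg by (intro mult_left_mono) auto
      then show ?thesis using True by (simp add: ennreal_leI)
    next
      case False
      then show ?thesis by simp
    qed
  qed
  also have "\<dots> = (\<Sum>k. ennreal (w m k * (1 + d / NN m)^k / (1 + T*d)))"
    by (rule nn_integral_count_space_nat)
  also have "\<dots> = ennreal (D 0 d / D 0 0 / (1 + T*d))"
  proof -
    have s: "(\<lambda>k. w m k * (1 + d / NN m)^k / (1 + T*d)) sums (D 0 d / D 0 0 / (1 + T*d))"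
      using w_sums[of m d] d NN_pos[of m] by (intro sums_divide) simp
    have nn0: "0 \<le> w m k * (1 + d / NN m)^k / (1 + T*d)" for k
      using w_nonneg[of m k] d NN_pos[of m] pos by simp
    show ?thesis
      using suminf_ennreal2[OF nn0 sums_summable[OF s]] s by (simp add: sums_iff)
  qed
  finally show ?thesis .
qed

lemma tight_Mn: "tight Mn"
  unfolding tight_def
proof (intro conjI allI impI)
  show "real_distribution (Mn n)" for n by (rule Mn_dist)
next
  fix e :: real assume e: "0 < e"
  obtain d where d0: "0 < ereal d" and db: "ereal d < b" using ereal_dense2[OF bpos] by blast
  have d: "0 < d" using d0 by simp
  define C where "C = D 0 d / D 0 0"
  have C: "0 \<le> C" unfolding C_def using nn[OF db] g0pos by simp
  define T where "T = C / (e * d)"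
  have T: "0 \<le> T" using C e d by (simp add: T_def)
  have Ce: "C / (1 + T*d) < e"
  proof -
    have "T * d = C / e" using e d by (simp add: T_def field_simps)
    then have "1 + T*d = (e + C) / e" using e by (simp add: field_simps)
    then have "C / (1 + T*d) = C * e / (e + C)" using e C by simp
    also have "\<dots> < e" using e C by (simp add: field_simps)
    finally show ?thesis .
  qed
  show "\<exists>a b. a < b \<and> (\<forall>n. 1 - e < measure (Mn n) {a<..b})"
  proof (intro exI conjI allI)
    show "-1 < T" using T by simp
    fix n
    interpret prob_space "Mn n" using Mn_dist[of n] by (simp add: real_distribution_def)
    have sp: "space (Mn n) = UNIV" by (simp add: Mn_def)
    have st: "sets (Mn n) = sets borel" by (simp add: Mn_def)
    have "emeasure (Mn n) {..-1} \<le> emeasure (Mn n) {..<0}" by (rule emeasure_mono) (auto simp: st)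
    then have m1: "measure (Mn n) {..-1} = 0" using Mn_neg[of n] by (simp add: measure_def)
    have "emeasure (Mn n) {T<..} \<le> ennreal (C / (1 + T*d))"
      using tail_bound[OF d db T, of n] by (simp add: C_def)
    then have m2: "measure (Mn n) {T<..} \<le> C / (1 + T*d)"
      using C T d by (auto simp: emeasure_eq_measure ennreal_le_iff2 ennreal_le_iff add_pos_nonneg intro: order_trans[OF _ divide_nonneg_nonneg])
    have "measure (Mn n) ({..-1} \<union> {T<..}) \<le> measure (Mn n) {..-1} + measure (Mn n) {T<..}"
      by (rule measure_Un_le) (auto simp: st)
    then have m3: "measure (Mn n) ({..-1} \<union> {T<..}) < e" using m1 m2 Ce by linarith
    have "measure (Mn n) (space (Mn n) - ({..-1} \<union> {T<..})) = 1 - measure (Mn n) ({..-1} \<union> {T<..})"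
      by (rule prob_compl) (auto simp: st)
    moreover have "space (Mn n) - ({..-1} \<union> {T<..}) = {-1<..T}" by (auto simp: sp)
    ultimately show "1 - e < measure (Mn n) {-1<..T}" using m3 by simp
  qed
qed

end


context bsetup
begin

lemma L_lim: "(\<lambda>m. L m y) \<longlonglongrightarrow> y"
proof -
  have ev: "eventually (\<lambda>m. 0 < 1 + y / NN m) sequentially"
  proof -
    obtain n0 :: nat where "\<bar>y\<bar> < real n0" using reals_Archimedean2 by blast
    then have "0 < 1 + y / NN m" if "m \<ge> n0" for m
      using that NN_pos[of m] by (simp add: NN_def field_simps)
    then show ?thesis unfolding eventually_sequentially by blast
  qed
  have "(\<lambda>n. (1 + y / real n) ^ n) \<longlonglongrightarrow> exp y" by (rule tendsto_exp_limit_sequentially)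
  then have "(\<lambda>m. (1 + y / NN m) ^ Suc m) \<longlonglongrightarrow> exp y"
    unfolding NN_def by (rule LIMSEQ_Suc)
  then have "(\<lambda>m. ln ((1 + y / NN m) ^ Suc m)) \<longlonglongrightarrow> ln (exp y)"
    by (intro tendsto_ln) auto
  then have "(\<lambda>m. ln ((1 + y / NN m) ^ Suc m)) \<longlonglongrightarrow> y" by simp
  moreover have "eventually (\<lambda>m. ln ((1 + y / NN m) ^ Suc m) = L m y) sequentially"
    using ev by eventually_elim (simp only: ln_realpow, simp add: L_def NN_def)
  ultimately show ?thesis by (rule Lim_transform_eventually)
qed

lemma exists_P:
  "\<exists>P. real_distribution P \<and> emeasure P {..<0} = 0
     \<and> (\<forall>y. ereal y < b \<longrightarrow> (\<integral>\<^sup>+t. ennreal (exp (y * t)) \<partial>P) \<le> ennreal (D 0 y / D 0 0))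
     \<and> (\<forall>y\<le>0. (\<integral>t. exp (y * t) \<partial>P) = D 0 y / D 0 0)"
proof -
  obtain r M where r: "strict_mono r" and M: "real_distribution M"
    and wc: "weak_conv_m (Mn \<circ> id \<circ> r) M"
    using tight_imp_convergent_subsubsequence[OF tight_Mn strict_mono_id] by blast
  have wc': "weak_conv_m (\<lambda>n. Mn (r n)) M" using wc by (simp add: comp_def)
  obtain \<Omega> :: "real measure" and Ys :: "nat \<Rightarrow> real \<Rightarrow> real" and Y :: "real \<Rightarrow> real" where all: "prob_space \<Omega> \<and>
    (\<forall>n. Ys n \<in> measurable \<Omega> borel) \<and>
    (\<forall>n. distr \<Omega> borel (Ys n) = Mn (r n)) \<and>
    Y \<in> measurable \<Omega> lborel \<and>
    distr \<Omega> borel Y = M \<and>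
    (\<forall>x \<in> space \<Omega>. (\<lambda>n. Ys n x) \<longlonglongrightarrow> Y x)"
    using Skorohod[of "\<lambda>n. Mn (r n)" M, OF Mn_dist M wc'] by blast
  have ps: "prob_space \<Omega>" and Ysm: "\<And>n. Ys n \<in> measurable \<Omega> borel"
    and Ysd: "\<And>n. distr \<Omega> borel (Ys n) = Mn (r n)"
    and Ym': "Y \<in> measurable \<Omega> lborel"
    and Yd: "distr \<Omega> borel Y = M"
    and conv: "\<And>x. x \<in> space \<Omega> \<Longrightarrow> (\<lambda>n. Ys n x) \<longlonglongrightarrow> Y x"
    using all by auto
  note [measurable] = Ysm
  interpret O: prob_space \<Omega> by (rule ps)
  have Ym: "Y \<in> borel_measurable \<Omega>"
    using Ym' by (simp add: measurable_lborel2)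
  note [measurable] = Ym
  have AEn: "AE \<omega> in \<Omega>. 0 \<le> Ys n \<omega>" for n
  proof (rule AE_I')
    have "emeasure \<Omega> (Ys n -` {..<0} \<inter> space \<Omega>) = emeasure (distr \<Omega> borel (Ys n)) {..<0}"
      by (subst emeasure_distr) (auto simp: Ysm)
    also have "\<dots> = 0" by (simp add: Ysd Mn_neg)
    finally show "Ys n -` {..<0} \<inter> space \<Omega> \<in> null_sets \<Omega>"
      using Ysm[of n] by (auto simp: null_sets_def)
  qed auto
  then have AEall: "AE \<omega> in \<Omega>. \<forall>n. 0 \<le> Ys n \<omega>" by (simp add: AE_all_countable)
  have AEY: "AE \<omega> in \<Omega>. 0 \<le> Y \<omega>"
    using AEall
  proof (rule AE_mp[OF _ AE_I2[OF impI]])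
    fix \<omega> assume "\<omega> \<in> space \<Omega>" "\<forall>n. 0 \<le> Ys n \<omega>"
    then show "0 \<le> Y \<omega>" using conv by (intro LIMSEQ_le_const[OF conv]) auto
  qed
  define P where "P = distr \<Omega> borel Y"
  have Pd: "real_distribution P" using M Yd by (simp add: P_def)
  have Pneg: "emeasure P {..<0} = 0"
  proof -
    have "emeasure P {..<0} = emeasure \<Omega> (Y -` {..<0} \<inter> space \<Omega>)"
      unfolding P_def by (subst emeasure_distr) (auto simp: Ym)
    also have "\<dots> = emeasure \<Omega> {\<omega>\<in>space \<Omega>. \<not> 0 \<le> Y \<omega>}"
      by (intro arg_cong[where f="emeasure \<Omega>"]) auto
    also have "\<dots> = 0"
    proof -
      have "{\<omega>\<in>space \<Omega>. \<not> 0 \<le> Y \<omega>} \<in> sets \<Omega>" using Ym by measurable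
      then show ?thesis using AEY by (subst AE_iff_measurable[symmetric]) auto
    qed
    finally show ?thesis .
  qed
  have Lr: "(\<lambda>n. L (r n) y) \<longlonglongrightarrow> y" for y
    using LIMSEQ_subseq_LIMSEQ[OF L_lim r] by (simp add: comp_def)
  have evN: "eventually (\<lambda>n. - NN (r n) < y) sequentially" for y
  proof -
    obtain n0 :: nat where "\<bar>y\<bar> < real n0" using reals_Archimedean2 by blast
    then have "- NN (r n) < y" if "n \<ge> n0" for n
      using that seq_suble[OF r, of n] by (simp add: NN_def)
    then show ?thesis unfolding eventually_sequentially by blast
  qed
  have intn: "(\<integral>\<^sup>+\<omega>. ennreal (exp (Ys n \<omega> * L (r n) y)) \<partial>\<Omega>) = ennreal (D 0 y / D 0 0)"
    if "- NN (r n) < y" "ereal y < b" for n y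
  proof -
    have "(\<integral>\<^sup>+\<omega>. ennreal (exp (Ys n \<omega> * L (r n) y)) \<partial>\<Omega>)
        = (\<integral>\<^sup>+t. ennreal (exp (t * L (r n) y)) \<partial>distr \<Omega> borel (Ys n))"
      by (subst nn_integral_distr) (auto simp: Ysm)
    also have "\<dots> = ennreal (D 0 y / D 0 0)" using int_kernel[OF that] by (simp add: Ysd)
    finally show ?thesis .
  qed
  have fatou: "(\<integral>\<^sup>+t. ennreal (exp (y * t)) \<partial>P) \<le> ennreal (D 0 y / D 0 0)"
    if yb: "ereal y < b" for y
  proof -
    have "(\<integral>\<^sup>+t. ennreal (exp (y * t)) \<partial>P) = (\<integral>\<^sup>+\<omega>. ennreal (exp (y * Y \<omega>)) \<partial>\<Omega>)"
      unfolding P_def by (subst nn_integral_distr) (auto simp: Ym)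
    also have "\<dots> = (\<integral>\<^sup>+\<omega>. liminf (\<lambda>n. ennreal (exp (Ys n \<omega> * L (r n) y))) \<partial>\<Omega>)"
    proof (rule nn_integral_cong)
      fix \<omega> assume "\<omega> \<in> space \<Omega>"
      then have "(\<lambda>n. ennreal (exp (Ys n \<omega> * L (r n) y))) \<longlonglongrightarrow> ennreal (exp (Y \<omega> * y))"
        by (intro tendsto_intros conv Lr)
      then show "ennreal (exp (y * Y \<omega>)) = liminf (\<lambda>n. ennreal (exp (Ys n \<omega> * L (r n) y)))"
        by (subst lim_imp_Liminf) (auto simp: mult.commute)
    qed
    also have "\<dots> \<le> liminf (\<lambda>n. \<integral>\<^sup>+\<omega>. ennreal (exp (Ys n \<omega> * L (r n) y)) \<partial>\<Omega>)"
      by (rule nn_integral_liminf) measurable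
    also have "\<dots> = ennreal (D 0 y / D 0 0)"
    proof (rule lim_imp_Liminf)
      show "(\<lambda>n. \<integral>\<^sup>+\<omega>. ennreal (exp (Ys n \<omega> * L (r n) y)) \<partial>\<Omega>) \<longlonglongrightarrow> ennreal (D 0 y / D 0 0)"
        by (intro tendsto_eventually eventually_mono[OF evN[of y]] intn[OF _ yb])
    qed simp
    finally show ?thesis .
  qed
  have dom: "(\<integral>t. exp (y * t) \<partial>P) = D 0 y / D 0 0" if y0: "y \<le> 0" for y
  proof -
    have yb: "ereal y < b" using y0 bpos
      by (metis ereal_less_eq(3) order_le_less_trans zero_ereal_def)
    have Lneg: "L m y \<le> 0" for m
    proof (cases "0 < 1 + y / NN m")
      case True
      then have "ln (1 + y / NN m) \<le> 0" using y0 NN_pos[of m] by (simp add: divide_nonpos_pos)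
      then show ?thesis using True NN_pos[of m] by (simp add: L_def mult_nonneg_nonpos)
    qed (use y0 in \<open>simp add: L_def\<close>)
    have lim: "(\<lambda>n. \<integral>\<omega>. exp (Ys n \<omega> * L (r n) y) \<partial>\<Omega>) \<longlonglongrightarrow> (\<integral>\<omega>. exp (Y \<omega> * y) \<partial>\<Omega>)"
    proof (rule integral_dominated_convergence[where w="\<lambda>_. 1"])
      show "AE \<omega> in \<Omega>. (\<lambda>n. exp (Ys n \<omega> * L (r n) y)) \<longlonglongrightarrow> exp (Y \<omega> * y)"
        by (intro AE_I2 tendsto_intros conv Lr)
      show "AE \<omega> in \<Omega>. norm (exp (Ys n \<omega> * L (r n) y)) \<le> 1" for n
        using AEn[of n]
      proof (rule AE_mp[OF _ AE_I2[OF impI]])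
        fix \<omega> assume "0 \<le> Ys n \<omega>"
        then have "Ys n \<omega> * L (r n) y \<le> 0" using Lneg by (simp add: mult_nonneg_nonpos)
        then show "norm (exp (Ys n \<omega> * L (r n) y)) \<le> 1" by simp
      qed
    qed (auto simp: Ysm Ym)
    have evn: "eventually (\<lambda>n. (\<integral>\<omega>. exp (Ys n \<omega> * L (r n) y) \<partial>\<Omega>) = D 0 y / D 0 0) sequentially"
      using evN[of y]
    proof eventually_elim
      case (elim n)
      have "(\<integral>\<omega>. exp (Ys n \<omega> * L (r n) y) \<partial>\<Omega>)
          = enn2real (\<integral>\<^sup>+\<omega>. ennreal (exp (Ys n \<omega> * L (r n) y)) \<partial>\<Omega>)"
        by (rule integral_eq_nn_integral) (auto simp: Ysm)
      also have "\<dots> = D 0 y / D 0 0" using intn[OF elim yb] nn[OF yb] g0pos by simp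
      finally show ?case .
    qed
    have "(\<lambda>n. \<integral>\<omega>. exp (Ys n \<omega> * L (r n) y) \<partial>\<Omega>) \<longlonglongrightarrow> D 0 y / D 0 0"
      using evn by (rule tendsto_eventually)
    with lim have "(\<integral>\<omega>. exp (Y \<omega> * y) \<partial>\<Omega>) = D 0 y / D 0 0" by (rule LIMSEQ_unique)
    moreover have "(\<integral>t. exp (y * t) \<partial>P) = (\<integral>\<omega>. exp (Y \<omega> * y) \<partial>\<Omega>)"
      unfolding P_def by (subst integral_distr) (auto simp: Ym mult.commute)
    ultimately show ?thesis by simp
  qed
  show ?thesis using Pd Pneg fatou dom by blast
qed

end


lemma exp_sums_real: "(\<lambda>n. x^n / fact n) sums exp (x::real)"
  using exp_converges[of x] by (simp add: divide_inverse mult.commute)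

lemma exp_suminf_real: "exp (x::real) = (\<Sum>n. x^n / fact n)"
  using exp_sums_real[of x] by (simp add: sums_iff)

lemma exp_summable_real: "summable (\<lambda>n. (x::real)^n / fact n)"
  using exp_sums_real[of x] by (simp add: sums_iff)

lemma exp_partial_le: "0 \<le> (x::real) \<Longrightarrow> (\<Sum>m<n. x^m / fact m) \<le> exp x"
  unfolding exp_suminf_real[of x] by (intro sum_le_suminf exp_summable_real) auto

lemma exp_term_le: "0 \<le> (x::real) \<Longrightarrow> x^m / fact m \<le> exp x"
proof -
  assume x: "0 \<le> x"
  have "(\<Sum>i\<in>{m}. x^i / fact i) \<le> exp x"
    unfolding exp_suminf_real[of x] using x by (intro sum_le_suminf exp_summable_real) auto
  then show ?thesis by simp
qed

lemma powser_zero_left: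
  fixes d :: "nat \<Rightarrow> real" and r :: real
  assumes r: "0 < r"
    and summ: "\<And>y. \<bar>y\<bar> < r \<Longrightarrow> summable (\<lambda>m. d m * y^m)"
    and zero: "\<And>y. - r < y \<Longrightarrow> y < 0 \<Longrightarrow> (\<Sum>m. d m * y^m) = 0"
  shows "d m = 0"
proof (induction m rule: less_induct)
  case (less m)
  define e where "e i = d (i + m)" for i
  have ez: "(\<Sum>i. e i * y^i) = 0" if y: "- r < y" "y < 0" for y
  proof -
    have s: "summable (\<lambda>i. d i * y^i)" using y by (intro summ) auto
    have "0 = (\<Sum>i. d i * y^i)" using zero y by simp
    also have "\<dots> = (\<Sum>i. d (i + m) * y^(i + m)) + (\<Sum>i<m. d i * y^i)"
      by (rule suminf_split_initial_segment[OF s])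
    also have "(\<Sum>i<m. d i * y^i) = 0" using less by simp
    also have "(\<Sum>i. d (i + m) * y^(i + m)) = (\<Sum>i. y^m * (e i * y^i))"
      by (simp add: e_def power_add mult_ac)
    also have "\<dots> = y^m * (\<Sum>i. e i * y^i)"
    proof (rule suminf_mult)
      have "summable (\<lambda>i. d (i + m) * y^(i + m))" using s by (subst summable_iff_shift)
      then have "summable (\<lambda>i. (d (i + m) * y^(i + m)) / y^m)" by (rule summable_divide)
      then show "summable (\<lambda>i. e i * y^i)" using y by (simp add: e_def power_add)
    qed
    finally show ?thesis using y by simp
  qed
  define K where "K = - r / 2"
  have sK: "summable (\<lambda>i. e i * K^i)"
  proof -
    have s: "summable (\<lambda>i. d i * K^i)" using r by (intro summ) (simp add: K_def)
    have "summable (\<lambda>i. d (i + m) * K^(i + m))" using s by (subst summable_iff_shift)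
    then have "summable (\<lambda>i. (d (i + m) * K^(i + m)) / K^m)" by (rule summable_divide)
    then show ?thesis using r by (simp add: e_def power_add K_def)
  qed
  have cont: "isCont (\<lambda>z. \<Sum>i. e i * z^i) 0"
    by (rule isCont_powser[OF sK]) (use r in \<open>simp add: K_def\<close>)
  define zs where "zs n = - r / (real n + 2)" for n
  have "zs \<longlonglongrightarrow> 0"
    unfolding zs_def by real_asymp
  then have "(\<lambda>n. \<Sum>i. e i * zs n ^ i) \<longlonglongrightarrow> (\<Sum>i. e i * 0^i)"
    by (rule isCont_tendsto_compose[OF cont])
  moreover have "(\<Sum>i. e i * zs n ^ i) = 0" for n
    by (rule ez) (use r in \<open>auto simp: zs_def field_simps add_pos_nonneg\<close>)
  ultimately have "(\<Sum>i. e i * 0^i) = 0" by (simp add: LIMSEQ_const_iff)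
  then show ?case by (simp add: e_def)
qed



context bsetup
begin

lemma main_P:
  fixes a :: "nat \<Rightarrow> real"
  assumes ps: "\<And>y. ereal \<bar>y\<bar> < b \<Longrightarrow> (\<lambda>m. a m * y^m) sums D 0 y"
  shows "\<exists>P. real_distribution P \<and> emeasure P {..<0} = 0 \<and> (AE t in P. 0 \<le> t) \<and>
    (\<forall>y. ereal y < b \<longrightarrow> integrable P (\<lambda>t. exp (y*t)) \<and> (\<integral>t. exp (y*t) \<partial>P) = D 0 y / D 0 0) \<and>
    (\<forall>m. integrable P (\<lambda>t. t^m) \<and> (\<integral>t. t^m \<partial>P) = fact m * a m / D 0 0)"
proof -
  obtain P where Pd: "real_distribution P" and Pneg: "emeasure P {..<0} = 0"
    and fatou: "\<And>y. ereal y < b \<Longrightarrow> (\<integral>\<^sup>+t. ennreal (exp (y * t)) \<partial>P) \<le> ennreal (D 0 y / D 0 0)"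
    and dom: "\<And>y. y \<le> 0 \<Longrightarrow> (\<integral>t. exp (y * t) \<partial>P) = D 0 y / D 0 0"
    using exists_P by blast
  interpret P: real_distribution P by (rule Pd)
  have AE0: "AE t in P. 0 \<le> t"
  proof (rule AE_I')
    show "{..<0} \<in> null_sets P" using Pneg by (auto simp: null_sets_def)
  qed auto
  have intexp: "integrable P (\<lambda>t. exp (y*t))" if "ereal y < b" for y
  proof (rule integrableI_bounded)
    show "(\<integral>\<^sup>+t. ennreal (norm (exp (y*t))) \<partial>P) < \<infinity>"
      using fatou[OF that] by (simp add: order_le_less_trans)
  qed simp
  obtain s where s0: "0 < ereal s" and sb: "ereal s < b" using ereal_dense2[OF bpos] by blast
  have s: "0 < s" using s0 by simp
  have intpow: "integrable P (\<lambda>t. t^m)" for m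
  proof (rule Bochner_Integration.integrable_bound[where f="\<lambda>t. fact m / s^m * exp (s*t)"])
    show "integrable P (\<lambda>t. fact m / s^m * exp (s*t))"
      using intexp[OF sb] by simp
    show "AE t in P. norm (t^m) \<le> norm (fact m / s^m * exp (s*t))"
      using AE0
    proof (rule AE_mp[OF _ AE_I2[OF impI]])
      fix t :: real assume t: "0 \<le> t"
      have "(s*t)^m / fact m \<le> exp (s*t)" using s t by (intro exp_term_le) simp
      then have "(s*t)^m \<le> exp (s*t) * fact m" by (simp add: divide_le_eq)
      then have "s^m * t^m \<le> s^m * (fact m / s^m * exp (s*t))"
        using s by (simp add: power_mult_distrib field_simps)
      then have "t^m \<le> fact m / s^m * exp (s*t)"
        using s by (simp add: pos_le_divide_eq mult.commute)
      then show "norm (t^m) \<le> norm (fact m / s^m * exp (s*t))" using t s by simp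
    qed
  qed simp
  define Mo where "Mo m = (\<integral>t. t^m \<partial>P)" for m
  have ser: "(\<lambda>m. y^m / fact m * Mo m) sums (\<integral>t. exp (y*t) \<partial>P)" if yb: "ereal \<bar>y\<bar> < b" for y
  proof -
    have lim: "(\<lambda>n. \<integral>t. (\<Sum>m<n. (y*t)^m / fact m) \<partial>P) \<longlonglongrightarrow> (\<integral>t. exp (y*t) \<partial>P)"
    proof (rule integral_dominated_convergence[where w="\<lambda>t. exp (\<bar>y\<bar>*t)"])
      show "integrable P (\<lambda>t. exp (\<bar>y\<bar>*t))" by (rule intexp[OF yb])
      show "AE t in P. (\<lambda>n. \<Sum>m<n. (y*t)^m / fact m) \<longlonglongrightarrow> exp (y*t)"
        using exp_sums_real by (simp add: sums_def)
      show "AE t in P. norm (\<Sum>m<n. (y*t)^m / fact m) \<le> exp (\<bar>y\<bar>*t)" for n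
        using AE0
      proof (rule AE_mp[OF _ AE_I2[OF impI]])
        fix t :: real assume t: "0 \<le> t"
        have "norm (\<Sum>m<n. (y*t)^m / fact m) \<le> (\<Sum>m<n. norm ((y*t)^m / fact m))"
          by (rule norm_sum)
        also have "\<dots> = (\<Sum>m<n. (\<bar>y\<bar>*t)^m / fact m)"
          using t by (simp add: abs_mult power_abs)
        also have "\<dots> \<le> exp (\<bar>y\<bar>*t)" using t by (intro exp_partial_le) simp
        finally show "norm (\<Sum>m<n. (y*t)^m / fact m) \<le> exp (\<bar>y\<bar>*t)" .
      qed
    qed simp_all
    have "(\<integral>t. (\<Sum>m<n. (y*t)^m / fact m) \<partial>P) = (\<Sum>m<n. y^m / fact m * Mo m)" for n
    proof -
      have "(\<integral>t. (\<Sum>m<n. (y*t)^m / fact m) \<partial>P) = (\<integral>t. (\<Sum>m<n. y^m / fact m * t^m) \<partial>P)"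
        by (simp add: power_mult_distrib)
      also have "\<dots> = (\<Sum>m<n. \<integral>t. y^m / fact m * t^m \<partial>P)"
        by (rule Bochner_Integration.integral_sum) (simp add: intpow)
      also have "\<dots> = (\<Sum>m<n. y^m / fact m * Mo m)" by (simp add: Mo_def)
      finally show ?thesis .
    qed
    with lim show ?thesis by (simp add: sums_def)
  qed
  have coef: "a m / D 0 0 = Mo m / fact m" for m
  proof -
    define d where "d m = a m / D 0 0 - Mo m / fact m" for m
    have bs: "ereal \<bar>y\<bar> < b" if "\<bar>y\<bar> < s" for y
    proof -
      have "ereal \<bar>y\<bar> < ereal s" using that by simp
      then show ?thesis using sb by (rule order.strict_trans)
    qed
    have "d m = 0"
    proof (rule powser_zero_left[OF s])
      fix y assume y: "\<bar>y\<bar> < s"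
      have "(\<lambda>m. a m * y^m / D 0 0 - y^m / fact m * Mo m) sums (D 0 y / D 0 0 - (\<integral>t. exp (y*t) \<partial>P))"
        by (intro sums_diff sums_divide ps ser bs y)
      then show "summable (\<lambda>m. d m * y^m)"
        by (simp add: d_def sums_iff algebra_simps)
    next
      fix y assume y: "- s < y" "y < 0"
      then have yy: "\<bar>y\<bar> < s" by simp
      have "(\<lambda>m. a m * y^m / D 0 0 - y^m / fact m * Mo m) sums (D 0 y / D 0 0 - (\<integral>t. exp (y*t) \<partial>P))"
        by (intro sums_diff sums_divide ps ser bs yy)
      then have "(\<lambda>m. d m * y^m) sums (D 0 y / D 0 0 - (\<integral>t. exp (y*t) \<partial>P))"
        by (simp add: d_def algebra_simps)
      moreover have "D 0 y / D 0 0 - (\<integral>t. exp (y*t) \<partial>P) = 0" using dom[of y] y by simp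
      ultimately show "(\<Sum>m. d m * y^m) = 0" by (simp add: sums_iff)
    qed
    then show ?thesis by (simp add: d_def)
  qed
  have expeq: "(\<integral>t. exp (y*t) \<partial>P) = D 0 y / D 0 0" if yb: "ereal y < b" for y
  proof (cases "y \<le> 0")
    case True
    then show ?thesis by (rule dom)
  next
    case False
    then have yb': "ereal \<bar>y\<bar> < b" using yb by simp
    have "(\<lambda>m. y^m / fact m * Mo m) sums (\<integral>t. exp (y*t) \<partial>P)" by (rule ser[OF yb'])
    moreover have "(\<lambda>m. y^m / fact m * Mo m) = (\<lambda>m. a m * y^m / D 0 0)"
    proof
      fix m
      have "Mo m = fact m * (a m / D 0 0)" using coef[of m] by (simp add: field_simps)
      then show "y^m / fact m * Mo m = a m * y^m / D 0 0" by simp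
    qed
    moreover have "(\<lambda>m. a m * y^m / D 0 0) sums (D 0 y / D 0 0)"
      by (intro sums_divide ps yb')
    ultimately show ?thesis by (simp add: sums_iff)
  qed
  have momeq: "(\<integral>t. t^m \<partial>P) = fact m * a m / D 0 0" for m
    using coef[of m] by (simp add: Mo_def field_simps)
  show ?thesis using Pd Pneg AE0 intexp expeq intpow momeq by blast
qed

end


lemma logconv:
  fixes M :: "real measure"
  assumes AE0: "AE t in M. 0 \<le> t" and int: "\<And>j. integrable M (\<lambda>t. t^j)"
  shows "(\<integral>t. t^(k+1) \<partial>M)^2 \<le> (\<integral>t. t^(k+2) \<partial>M) * (\<integral>t. t^k \<partial>M)"
proof -
  define A where "A = (\<integral>t. t^(k+2) \<partial>M)"
  define B where "B = (\<integral>t. t^(k+1) \<partial>M)"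
  define C where "C = (\<integral>t. t^k \<partial>M)"
  have q: "0 \<le> A - 2*l*B + l^2 * C" for l
  proof -
    have "0 \<le> (\<integral>t. t^k * (t - l)^2 \<partial>M)"
      by (rule integral_nonneg_AE) (use AE0 in \<open>auto elim!: AE_mp\<close>)
    also have "(\<integral>t. t^k * (t - l)^2 \<partial>M) = (\<integral>t. t^(k+2) - 2*l * t^(k+1) + l^2 * t^k \<partial>M)"
      by (rule Bochner_Integration.integral_cong) (auto simp: power2_eq_square algebra_simps)
    also have "\<dots> = A - 2*l*B + l^2 * C"
    proof -
      have i1: "integrable M (\<lambda>t. t^(k+2))" and i2: "integrable M (\<lambda>t. 2*l * t^(k+1))"
        and i3: "integrable M (\<lambda>t. l^2 * t^k)" by (intro int integrable_mult_right)+
      have "(\<integral>t. t^(k+2) - 2*l * t^(k+1) + l^2 * t^k \<partial>M)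
          = (\<integral>t. t^(k+2) - 2*l * t^(k+1) \<partial>M) + (\<integral>t. l^2 * t^k \<partial>M)"
        using i1 i2 i3 by (intro Bochner_Integration.integral_add) auto
      also have "(\<integral>t. t^(k+2) - 2*l * t^(k+1) \<partial>M) = (\<integral>t. t^(k+2) \<partial>M) - (\<integral>t. 2*l * t^(k+1) \<partial>M)"
        using i1 i2 by (rule Bochner_Integration.integral_diff)
      finally show ?thesis by (simp add: A_def B_def C_def)
    qed
    finally show ?thesis .
  qed
  have C0: "0 \<le> C" unfolding C_def
    by (rule integral_nonneg_AE) (use AE0 in \<open>auto elim!: AE_mp\<close>)
  show ?thesis
  proof (cases "C = 0")
    case False
    then have Cp: "0 < C" using C0 by simp
    have "0 \<le> A - 2*(B/C)*B + (B/C)^2 * C" by (rule q)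
    also have "\<dots> = A - B^2 / C" using Cp by (simp add: power2_eq_square field_simps)
    finally have "B^2 / C \<le> A" by simp
    then have "B^2 \<le> A * C" using Cp by (simp add: divide_le_eq)
    then show ?thesis by (simp add: A_def B_def C_def)
  next
    case True
    have "B = 0"
    proof (rule ccontr)
      assume Bn: "B \<noteq> 0"
      have "0 \<le> A - 2*((A+1)/(2*B))*B + ((A+1)/(2*B))^2 * C" by (rule q)
      also have "\<dots> = -1" using Bn True by (simp add: field_simps)
      finally show False by simp
    qed
    then show ?thesis using True by (simp add: A_def B_def C_def)
  qed
qed

theorem proposition9:
  fixes c :: "nat \<Rightarrow> real" and F :: "real \<Rightarrow> real" and x0 :: ereal
  assumes nonneg: "\<And>m. m \<ge> 1 \<Longrightarrow> c m \<ge> 0"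
    and c1: "c 1 > 0"
    and x0_def: "x0 = conv_radius (phi_coeffs c)"
    and x0_pos: "x0 > 0"
    and S: "in_S c F"
  defines "h \<equiv> (\<lambda>x. deriv F (- x))"
  shows "compl_monotone_on {x. - x0 < ereal x} h
       \<and> (\<exists>\<mu> :: real measure.
            finite_measure \<mu> \<and> sets \<mu> = sets borel \<and> emeasure \<mu> {..<0} = 0
          \<and> (\<forall>x. - x0 < ereal x \<longrightarrow>
               integrable \<mu> (\<lambda>t. exp (- x * t)) \<and> h x = (\<integral>t. exp (- x * t) \<partial>\<mu>))
          \<and> (\<forall>x. ereal \<bar>x\<bar> < x0 \<longrightarrow>
               (\<lambda>m. c (m + 1) / fact m * (- x) ^ m) sums h x)
          \<and> (\<forall>m. integrable \<mu> (\<lambda>t. t ^ m) \<and> c (m + 1) = (\<integral>t. t ^ m \<partial>\<mu>))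
          \<and> measure \<mu> (space \<mu>) = c 1)
       \<and> (\<forall>m\<ge>2. c (m + 1) * c (m - 1) \<ge> (c m)\<^sup>2)"
proof -
  define D where "D k = (deriv ^^ k) (deriv F)" for k
  have Fser: "\<And>x. ereal \<bar>x\<bar> < x0 \<Longrightarrow> F x = (\<Sum>n. phi_coeffs c n * x ^ n)"
    and Fdiff: "\<And>x. ereal x < x0 \<Longrightarrow> F differentiable (at x)"
    and am: "abs_monotone_on {x. ereal x < x0} (deriv F)"
    using S by (auto simp: in_S_def x0_def)
  have der: "\<And>k t. ereal t < x0 \<Longrightarrow> (D k has_real_derivative D (Suc k) t) (at t)"
    and nn: "\<And>k t. ereal t < x0 \<Longrightarrow> D k t \<ge> 0"
    using am by (auto simp: abs_monotone_on_def smooth_on_def D_def)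
  have ps: "(\<lambda>m. c (m + 1) / fact m * y ^ m) sums deriv F y" if y: "ereal \<bar>y\<bar> < x0" for y
  proof -
    obtain K where K1: "ereal \<bar>y\<bar> < ereal K" and K2: "ereal K < x0" using ereal_dense2[OF y] by blast
    have sF: "(\<lambda>n. phi_coeffs c n * z ^ n) sums F z" if z: "norm z < K" for z
    proof -
      have "ereal (norm z) < ereal K" using z by simp
      then have zx: "ereal (norm z) < x0" using K2 by (rule order.strict_trans)
      have "summable (\<lambda>n. phi_coeffs c n * z ^ n)"
        by (rule summable_in_conv_radius) (use zx x0_def in simp)
      then show ?thesis using Fser[of z] zx by (simp add: sums_iff)
    qed
    have "ereal y \<le> ereal \<bar>y\<bar>" by simp
    then have yx: "ereal y < x0" using y by (rule order.strict_trans1)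
    have dF: "(F has_field_derivative deriv F y) (at y)"
      using Fdiff[OF yx] by (simp add: DERIV_deriv_iff_real_differentiable)
    have yK: "norm y < K" using K1 by simp
    have "(\<lambda>n. diffs (phi_coeffs c) n * y ^ n) sums deriv F y"
      by (rule termdiffs_sums_strong[OF sF dF yK])
    moreover have "diffs (phi_coeffs c) n = c (n + 1) / fact n" for n
      by (simp add: diffs_def phi_coeffs_def field_simps del: of_nat_Suc)
    ultimately show ?thesis by simp
  qed
  have g0: "D 0 0 = c 1"
  proof -
    have "(\<lambda>m. c (m + 1) / fact m * 0 ^ m) sums deriv F 0" using ps[of 0] x0_pos by (simp add: zero_ereal_def)
    moreover have "(\<lambda>m. c (m + 1) / fact m * 0 ^ m) sums (c (0+1) / fact 0)" by (rule powser_sums_zero)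
    ultimately show ?thesis by (simp add: D_def sums_unique2)
  qed
  interpret bsetup D x0
  proof
    show "\<And>k t. ereal t < x0 \<Longrightarrow> (D k has_real_derivative D (Suc k) t) (at t)" by (rule der)
    show "\<And>k t. ereal t < x0 \<Longrightarrow> D k t \<ge> 0" by (rule nn)
    show "0 < x0" by (rule x0_pos)
    show "D 0 0 > 0" using g0 c1 by simp
  qed
  obtain P where Pd: "real_distribution P" and Pneg: "emeasure P {..<0} = 0"
    and AE0: "AE t in P. 0 \<le> t"
    and Pexp: "\<And>y. ereal y < x0 \<Longrightarrow> integrable P (\<lambda>t. exp (y*t)) \<and> (\<integral>t. exp (y*t) \<partial>P) = D 0 y / D 0 0"
    and Pmom: "\<And>m. integrable P (\<lambda>t. t^m) \<and> (\<integral>t. t^m \<partial>P) = fact m * (c (m + 1) / fact m) / D 0 0"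
    using main_P[of "\<lambda>m. c (m + 1) / fact m"] ps by (auto simp: D_def)
  interpret P: real_distribution P by (rule Pd)
  define \<mu> where "\<mu> = density P (\<lambda>_. ennreal (c 1))"
  have sets\<mu>: "sets \<mu> = sets borel" by (simp add: \<mu>_def)
  have space\<mu>: "space \<mu> = UNIV" by (simp add: \<mu>_def)
  have em: "emeasure \<mu> A = ennreal (c 1) * emeasure P A" if "A \<in> sets borel" for A
    using that by (simp add: \<mu>_def emeasure_density nn_integral_cmult_indicator)
  have \<mu>neg: "emeasure \<mu> {..<0} = 0" using em[of "{..<0}"] Pneg by simp
  have \<mu>tot: "emeasure \<mu> (space \<mu>) = ennreal (c 1)"
    using em[of UNIV] P.emeasure_space_1 by (simp add: space\<mu>)
  have fin: "finite_measure \<mu>" by (rule finite_measureI) (simp add: \<mu>tot)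
  have meas: "measure \<mu> (space \<mu>) = c 1" using \<mu>tot c1 by (simp add: measure_def)
  have intd: "integrable \<mu> f \<longleftrightarrow> integrable P (\<lambda>t. c 1 * f t)" if [measurable]: "f \<in> borel_measurable borel" for f :: "real \<Rightarrow> real"
    unfolding \<mu>_def using c1 by (subst integrable_density) auto
  have intg: "(\<integral>t. f t \<partial>\<mu>) = (\<integral>t. c 1 * f t \<partial>P)" if [measurable]: "f \<in> borel_measurable borel" for f :: "real \<Rightarrow> real"
    unfolding \<mu>_def using c1 by (subst integral_density) auto
  have part2a: "integrable \<mu> (\<lambda>t. exp (- x * t)) \<and> h x = (\<integral>t. exp (- x * t) \<partial>\<mu>)"
    if x: "- x0 < ereal x" for x
  proof -
    have yx: "ereal (- x) < x0" using x ereal_uminus_less_reorder[of x0 "ereal x"] by simp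
    have i: "integrable P (\<lambda>t. exp (- x * t))" and e: "(\<integral>t. exp (- x * t) \<partial>P) = D 0 (- x) / D 0 0"
      using Pexp[OF yx] by auto
    show ?thesis
    proof
      show "integrable \<mu> (\<lambda>t. exp (- x * t))" using i by (subst intd) auto
      have "(\<integral>t. exp (- x * t) \<partial>\<mu>) = (\<integral>t. c 1 * exp (- x * t) \<partial>P)" by (rule intg) simp
      also have "\<dots> = c 1 * (\<integral>t. exp (- x * t) \<partial>P)" by (rule integral_mult_right_zero)
      also have "\<dots> = c 1 * (D 0 (- x) / D 0 0)" by (simp only: e)
      also have "\<dots> = h x" using g0 c1 by (simp add: h_def D_def)
      finally show "h x = (\<integral>t. exp (- x * t) \<partial>\<mu>)" by simp
    qed
  qed
  have part2b: "(\<lambda>m. c (m + 1) / fact m * (- x) ^ m) sums h x" if "ereal \<bar>x\<bar> < x0" for x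
    using ps[of "- x"] that by (simp add: h_def)
  have part2c: "integrable \<mu> (\<lambda>t. t ^ m) \<and> c (m + 1) = (\<integral>t. t ^ m \<partial>\<mu>)" for m
  proof
    show "integrable \<mu> (\<lambda>t. t ^ m)" using Pmom[of m] by (subst intd) auto
    have "(\<integral>t. t ^ m \<partial>\<mu>) = c 1 * (fact m * (c (m + 1) / fact m) / D 0 0)"
      using Pmom[of m] by (subst intg) auto
    also have "\<dots> = c (m + 1)" using g0 c1 by simp
    finally show "c (m + 1) = (\<integral>t. t ^ m \<partial>\<mu>)" by simp
  qed
  have part3: "c (m + 1) * c (m - 1) \<ge> (c m)\<^sup>2" if m: "m \<ge> 2" for m
  proof -
    define k where "k = m - 2"
    have k: "m = k + 2" using m by (simp add: k_def)
    have AE\<mu>: "AE t in \<mu>. 0 \<le> t"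
    proof (rule AE_I')
      show "{..<0} \<in> null_sets \<mu>" using \<mu>neg by (auto simp: null_sets_def sets\<mu>)
    qed auto
    have "(\<integral>t. t^(k+1) \<partial>\<mu>)^2 \<le> (\<integral>t. t^(k+2) \<partial>\<mu>) * (\<integral>t. t^k \<partial>\<mu>)"
      by (rule logconv[OF AE\<mu>]) (use part2c in auto)
    moreover have "c (m + 1) = (\<integral>t. t^(k+2) \<partial>\<mu>)" "c (m - 1) = (\<integral>t. t^k \<partial>\<mu>)" "c m = (\<integral>t. t^(k+1) \<partial>\<mu>)"
      using part2c[of "k+2"] part2c[of k] part2c[of "k+1"] k by (simp_all add: add.commute)
    ultimately show ?thesis by simp
  qed
  define V where "V = {x. - x0 < ereal x}"
  have Vo: "open V" unfolding V_def
    by (rule open_Collect_less) (auto intro!: continuous_intros)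
  have VU: "ereal (- x) < x0" if "x \<in> V" for x
    using that ereal_uminus_less_reorder[of x0 "ereal x"] by (simp add: V_def)
  have val: "\<forall>x\<in>V. (deriv ^^ n) h x = (-1)^n * D n (- x)" for n
  proof (induction n)
    case 0
    then show ?case by (simp add: h_def D_def)
  next
    case (Suc n)
    show ?case
    proof
      fix x assume x: "x \<in> V"
      have "((\<lambda>z. (-1)^n * D n (- z)) has_real_derivative (-1)^(Suc n) * D (Suc n) (- x)) (at x)"
        proof -
        have d1: "(D n has_real_derivative D (Suc n) (- x)) (at (- x))" by (rule der[OF VU[OF x]])
        have d2: "((\<lambda>z::real. - z) has_real_derivative - 1) (at x)" by (rule DERIV_minus[OF DERIV_ident])
        have "((\<lambda>z. D n (- z)) has_real_derivative D (Suc n) (- x) * (- 1)) (at x)"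
          using DERIV_chain2[where f="D n" and g="\<lambda>z. - z", OF d1 d2] by simp
        from DERIV_cmult[OF this, of "(-1)^n"] show ?thesis by simp
      qed
      then have "((deriv ^^ n) h has_real_derivative (-1)^(Suc n) * D (Suc n) (- x)) (at x)"
        by (rule has_field_derivative_transform_within_open[OF _ Vo x]) (use Suc in auto)
      then show "(deriv ^^ Suc n) h x = (-1)^(Suc n) * D (Suc n) (- x)"
        by (simp add: DERIV_imp_deriv)
    qed
  qed
  have part1: "compl_monotone_on V h"
    unfolding compl_monotone_on_def smooth_on_def
  proof (intro conjI allI ballI)
    fix n x assume x: "x \<in> V"
    have "((\<lambda>z. (-1)^n * D n (- z)) has_real_derivative (-1)^(Suc n) * D (Suc n) (- x)) (at x)"
      proof -
      have d1: "(D n has_real_derivative D (Suc n) (- x)) (at (- x))" by (rule der[OF VU[OF x]])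
      have d2: "((\<lambda>z::real. - z) has_real_derivative - 1) (at x)" by (rule DERIV_minus[OF DERIV_ident])
      have "((\<lambda>z. D n (- z)) has_real_derivative D (Suc n) (- x) * (- 1)) (at x)"
        using DERIV_chain2[where f="D n" and g="\<lambda>z. - z", OF d1 d2] by simp
      from DERIV_cmult[OF this, of "(-1)^n"] show ?thesis by simp
    qed
    then have "((deriv ^^ n) h has_real_derivative (-1)^(Suc n) * D (Suc n) (- x)) (at x)"
      by (rule has_field_derivative_transform_within_open[OF _ Vo x]) (use val in auto)
    moreover have "(deriv ^^ Suc n) h x = (-1)^(Suc n) * D (Suc n) (- x)" using val x by blast
    ultimately show "((deriv ^^ n) h has_real_derivative (deriv ^^ Suc n) h x) (at x)"
      by simp
    show "0 \<le> (-1)^n * (deriv ^^ n) h x" using val x nn[OF VU[OF x]] by simp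
  qed
  show ?thesis
    using part1 fin sets\<mu> \<mu>neg part2a part2b part2c meas part3 unfolding V_def by blast
qed


end
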